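(* As formal power series in $X$, $$\prod_{\mathcal{O}\in\Omega_{\alpha,\gamma}}\bigl(1-(-1)^{j(\mathcal{O})+\epsilon(\mathcal{O})}X^{|\mathcal{O}|}\bigr)^{-1}=1-uX^2,$$ where $u=(-1)^{(q-1)/2}$.
   Context: $k$ is an algebraic closure of $\mathbb{F}_q$, $q$ odd; $k^\triangle=k\setminus\{0,1,-1\}$; $\alpha(\lambda)=\lambda^{-1}$, $\gamma(\lambda)=\lambda^q$ on $k^\triangle$. $\Omega_{\alpha,\gamma}$ is the set of orbits of the group generated by $\alpha,\gamma$ on $k^\triangle$; $\Omega'_{\alpha,\gamma}$ consists of those orbits that are a single $\gamma$-orbit and $\Omega''_{\alpha,\gamma}$ of the others. $j(\mathcal{O})=1$ if $\mathcal{O}\in\Omega'_{\alpha,\gamma}$ and $j(\mathcal{O})=0$ otherwise. For $\mathcal{O}\in\Omega''_{\alpha,\gamma}$ and $\lambda\in\mathcal{O}$, $\lambda^{q^{|\mathcal{O}|/2}}=\lambda$ and $(-1)^{\epsilon(\mathcal{O})}=\lambda^{(q^{|\mathcal{O}|/2}-1)/2}$; for $\mathcal{O}\in\Omega'_{\alpha,\gamma}$ and $\lambda\in\mathcal{O}$, $\lambda^{q^{|\mathcal{O}|/2}}=\lambda^{-1}$ and $(-1)^{\epsilon(\mathcal{O})}=\lambda^{(q^{|\mathcal{O}|/2}+1)/2}$; this defines $\epsilon(\mathcal{O})\in\mathbb{Z}/2$ independently of $\lambda$. *)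

theory Defs
  imports "HOL-Computational_Algebra.Computational_Algebra"
begin

definition tri :: "'k::field set" where
  "tri = UNIV - {0, 1, -1}"

definition gamma_rel :: "nat \<Rightarrow> ('k::field \<times> 'k) set" where
  "gamma_rel q = {(x, y). y = x ^ q}"

definition alpha_rel :: "('k::field \<times> 'k) set" where
  "alpha_rel = {(x, y). y = inverse x}"

(* orbit of x under the group generated by alpha and gamma:
   closure under alpha, gamma and their inverses *)
definition ag_orbit :: "nat \<Rightarrow> 'k::field \<Rightarrow> 'k set" where
  "ag_orbit q x = ((gamma_rel q \<union> alpha_rel) \<union> (gamma_rel q \<union> alpha_rel)\<inverse>)\<^sup>* `` {x}"

definition g_orbit :: "nat \<Rightarrow> 'k::field \<Rightarrow> 'k set" where
  "g_orbit q x = (gamma_rel q \<union> (gamma_rel q)\<inverse>)\<^sup>* `` {x}"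

definition Omega :: "nat \<Rightarrow> 'k::field set set" where
  "Omega q = ag_orbit q ` tri"

definition Omega' :: "nat \<Rightarrow> 'k::field set set" where
  "Omega' q = {Ob \<in> Omega q. \<exists>x\<in>Ob. Ob = g_orbit q x}"

definition jO :: "nat \<Rightarrow> 'k::field set \<Rightarrow> nat" where
  "jO q Ob = (if Ob \<in> Omega' q then 1 else 0)"

definition epsO :: "nat \<Rightarrow> 'k::field set \<Rightarrow> nat" where
  "epsO q Ob =
     (let l = (SOME l. l \<in> Ob);
          v = (if Ob \<in> Omega' q then l ^ ((q ^ (card Ob div 2) + 1) div 2)
               else l ^ ((q ^ (card Ob div 2) - 1) div 2))
      in if v = 1 then 0 else 1)"

definition algebraic_over_prime_field :: "'k::field itself \<Rightarrow> bool" where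
  "algebraic_over_prime_field _ \<longleftrightarrow>
     (\<forall>x::'k. \<exists>P::'k poly. P \<noteq> 0 \<and> (\<forall>i. coeff P i \<in> range of_nat) \<and> poly P x = 0)"

end

theory Submission
  imports Defs
begin

definition EE :: "rat fps \<Rightarrow> rat fps" where
  "EE A = fps_X * fps_deriv A * inverse A"

lemma EE_mult:
  assumes "A $ 0 \<noteq> 0" "B $ 0 \<noteq> 0"
  shows "EE (A * B) = EE A + EE B"
proof -
  have iA: "A * inverse A = 1" using assms by (simp add: inverse_mult_eq_1')
  have iB: "B * inverse B = 1" using assms by (simp add: inverse_mult_eq_1')
  have "EE (A * B) = fps_X * (A * fps_deriv B + fps_deriv A * B) * (inverse A * inverse B)"
    by (simp add: EE_def fps_inverse_mult)
  also have "\<dots> = fps_X * fps_deriv B * inverse B * (A * inverse A) + fps_X * fps_deriv A * inverse A * (B * inverse B)"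
    by (simp add: algebra_simps)
  also have "\<dots> = EE A + EE B" by (simp add: iA iB EE_def add.commute)
  finally show ?thesis .
qed

lemma EE_inverse:
  assumes "A $ 0 \<noteq> 0"
  shows "EE (inverse A) = - EE A"
proof -
  have iA: "A * inverse A = 1" using assms by (simp add: inverse_mult_eq_1')
  have "EE (inverse A) = fps_X * (- fps_deriv A * (inverse A)\<^sup>2) * A"
    using assms by (simp add: EE_def fps_inverse_deriv)
  also have "\<dots> = - (fps_X * fps_deriv A * inverse A) * (A * inverse A)"
    by (simp add: power2_eq_square algebra_simps)
  finally show ?thesis by (simp add: iA EE_def)
qed

lemma EE_one: "EE 1 = 0" by (simp add: EE_def)

lemma prod_nth0: "finite S \<Longrightarrow> (\<Prod>x\<in>S. f x :: rat fps) $ 0 = (\<Prod>x\<in>S. f x $ 0)"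
  by (induction S rule: finite_induct) auto

lemma EE_prod:
  assumes "finite S" "\<And>x. x \<in> S \<Longrightarrow> f x $ 0 \<noteq> 0"
  shows "EE (\<Prod>x\<in>S. f x) = (\<Sum>x\<in>S. EE (f x))"
  using assms
proof (induction S rule: finite_induct)
  case empty then show ?case by (simp add: EE_one)
next
  case (insert a S)
  have "(\<Prod>x\<in>S. f x) $ 0 \<noteq> 0" using insert by (simp add: prod_nth0)
  then show ?case using insert by (simp add: EE_mult)
qed

definition geo :: "rat \<Rightarrow> nat \<Rightarrow> rat fps" where
  "geo c k = Abs_fps (\<lambda>n. if k dvd n then c ^ (n div k) else 0)"

lemma geo_inv:
  assumes "k > 0"
  shows "inverse (1 - fps_const c * fps_X ^ k) = geo c k"
proof (rule fps_inverse_unique, rule fps_ext)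
  fix n
  have "((1 - fps_const c * fps_X ^ k) * geo c k) $ n = geo c k $ n - c * (fps_X ^ k * geo c k) $ n"
    by (simp add: algebra_simps)
  also have "\<dots> = (1 :: rat fps) $ n"
  proof (cases "n = 0")
    case True then show ?thesis using assms by (simp add: fps_X_power_mult_nth geo_def)
  next
    case False
    show ?thesis
    proof (cases "k dvd n")
      case True
      then obtain t where t: "n = k * t" by blast
      with False have "t > 0" by auto
      then obtain t' where "t = Suc t'" using not0_implies_Suc by blast
      then show ?thesis using t False assms
        by (simp add: fps_X_power_mult_nth geo_def)
    next
      case nd: False
      have "\<not> k dvd (n - k)" if "\<not> n < k"
        using nd that by (metis dvd_minus_add le_add_diff_inverse2 not_less dvd_refl dvd_add)
      then show ?thesis using nd False
        by (auto simp add: fps_X_power_mult_nth geo_def)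
    qed
  qed
  finally show "((1 - fps_const c * fps_X ^ k) * geo c k) $ n = (1 :: rat fps) $ n" .
qed

lemma EE_geo:
  assumes "k > 0"
  shows "EE (inverse (1 - fps_const c * fps_X ^ k)) $ n
           = (if k dvd n \<and> n \<noteq> 0 then of_nat k * c ^ (n div k) else 0)"
proof -
  have c0: "(1 - fps_const c * fps_X ^ k) $ 0 \<noteq> 0" using assms by simp
  have E1: "EE (inverse (1 - fps_const c * fps_X ^ k)) =
        - (fps_X * fps_deriv (1 - fps_const c * fps_X ^ k) * geo c k)"
    unfolding EE_inverse[OF c0] unfolding EE_def geo_inv[OF assms] by (rule refl)
  have D: "fps_deriv (1 - fps_const c * fps_X ^ k) = - (fps_const c * (of_nat k * fps_X ^ (k - 1)))"
    using assms by (simp add: fps_deriv_power')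
  have h: "fps_X * fps_X ^ (k - 1) = (fps_X ^ k :: rat fps)"
    using assms by (cases k) simp_all
  have ac: "- ((X::rat fps) * - (A * (K * Y)) * g) = A*K*(X*Y)*g" for X A K Y g
    by (simp add: algebra_simps)
  have "EE (inverse (1 - fps_const c * fps_X ^ k)) = fps_const c * of_nat k * (fps_X ^ k) * geo c k"
    unfolding E1 D ac h by (rule refl)
  also have "\<dots> = fps_const (c * of_nat k) * (fps_X ^ k * geo c k)"
    by (simp only: fps_const_mult mult.assoc flip: fps_of_nat)
  finally have "EE (inverse (1 - fps_const c * fps_X ^ k)) = fps_const (c * of_nat k) * (fps_X ^ k * geo c k)" .
  then have "EE (inverse (1 - fps_const c * fps_X ^ k)) $ n = c * of_nat k * (if n < k then 0 else geo c k $ (n - k))"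
    by (simp add: fps_X_power_mult_nth)
  also have "\<dots> = (if k dvd n \<and> n \<noteq> 0 then of_nat k * c ^ (n div k) else 0)"
  proof (cases "k dvd n \<and> n \<noteq> 0")
    case True
    then obtain t where t: "n = k * t" by blast
    with True have "t > 0" by auto
    then obtain t' where "t = Suc t'" using not0_implies_Suc by blast
    then show ?thesis using t True assms by (simp add: geo_def)
  next
    case False
    have "\<not> k dvd (n - k)" if "\<not> n < k" "\<not> k dvd n"
      using that by (metis dvd_minus_add le_add_diff_inverse2 not_less dvd_refl dvd_add)
    then show ?thesis using False assms by (auto simp add: geo_def)
  qed
  finally show ?thesis .
qed

lemma EE_nth0: "EE A $ 0 = 0" by (simp add: EE_def)

lemma EE_key:
  assumes "A $ 0 \<noteq> 0"
  shows "of_nat n * A $ n = (\<Sum>i=0..n. EE A $ i * A $ (n - i))"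
proof -
  have "fps_X * fps_deriv A = EE A * A"
    using assms by (simp add: EE_def inverse_mult_eq_1 mult.assoc)
  then have "(fps_X * fps_deriv A) $ n = (EE A * A) $ n" by simp
  moreover have "(fps_X * fps_deriv A) $ n = of_nat n * A $ n"
    by (cases n) (simp_all)
  ultimately show ?thesis
    by (simp add: fps_mult_nth)
qed

lemma EE_unique:
  assumes "A $ 0 = B $ 0" "A $ 0 \<noteq> 0" "\<And>n. n \<le> N \<Longrightarrow> EE A $ n = EE B $ n"
  shows "n \<le> N \<Longrightarrow> A $ n = B $ n"
proof (induction n rule: less_induct)
  case (less n)
  show ?case
  proof (cases "n = 0")
    case True then show ?thesis using assms by simp
  next
    case False
    have "of_nat n * A $ n = (\<Sum>i=0..n. EE A $ i * A $ (n - i))" using EE_key assms by blast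
    also have "\<dots> = (\<Sum>i=0..n. EE B $ i * B $ (n - i))"
    proof (rule sum.cong[OF refl])
      fix i assume i: "i \<in> {0..n}"
      show "EE A $ i * A $ (n - i) = EE B $ i * B $ (n - i)"
      proof (cases "i = 0")
        case True then show ?thesis by (simp add: EE_nth0)
      next
        case False
        then show ?thesis using i less assms(3)[of i] less.IH[of "n - i"] by auto
      qed
    qed
    also have "\<dots> = of_nat n * B $ n" using EE_key[of B n] assms(1,2) by simp
    finally show ?thesis using False by simp
  qed
qed


lemma class_eq:
  assumes "y \<in> ((R \<union> R\<inverse>)\<^sup>*) `` {x}"
  shows "((R \<union> R\<inverse>)\<^sup>*) `` {y} = ((R \<union> R\<inverse>)\<^sup>*) `` {x}"
proof -
  have s: "sym ((R \<union> R\<inverse>)\<^sup>*)" by (intro sym_rtrancl) (auto simp: sym_def)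
  from assms have xy: "(x, y) \<in> (R \<union> R\<inverse>)\<^sup>*" by simp
  with s have yx: "(y, x) \<in> (R \<union> R\<inverse>)\<^sup>*" by (auto dest: symD)
  show ?thesis
    using xy yx by (auto intro: rtrancl_trans)
qed

lemma sq1_cases: "(v::'a::idom)^2 = 1 \<Longrightarrow> v = 1 \<or> v = -1"
  by (metis power2_eq_1_iff)

lemma sq1_pow_odd: "(v::'a::idom)^2 = 1 \<Longrightarrow> odd N \<Longrightarrow> v ^ N = v"
proof -
  assume v: "v^2 = 1" and "odd N"
  then obtain k where "N = Suc (2 * k)" using oddE by (metis Suc_eq_plus1)
  then show "v ^ N = v" using v by (simp add: power_mult)
qed

locale frob =
  fixes p m q :: nat and ty :: "'k::alg_closed_field itself"
  assumes p_prime: "prime p" and p_odd: "odd p" and m_pos: "m > 0" and q_def: "q = p ^ m"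
    and char: "CHAR('k) = p" and alg: "algebraic_over_prime_field TYPE('k)"
begin

lemma q_odd: "odd q" using p_odd q_def by simp
lemma q_gt1: "q > 1" using p_prime m_pos q_def
  by (metis one_less_power prime_gt_1_nat)
lemma q_pos: "q > 0" using q_gt1 by simp

lemma char_prime: "prime CHAR('k)" using char p_prime by simp

lemma one_neq_m1: "(1::'k) \<noteq> -1"
proof
  assume "(1::'k) = -1"
  then have "(of_nat 2 :: 'k) = 0" by (simp add: eq_neg_iff_add_eq_0 one_add_one)
  then have "p dvd 2" using char by (metis of_nat_eq_0_iff_char_dvd)
  then have "p \<le> 2" by (simp add: dvd_imp_le)
  moreover have "p \<ge> 2" using p_prime prime_ge_2_nat by blast
  ultimately have "p = 2" by simp
  then show False using p_odd by simp
qed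

lemma pw_add: "(x + y :: 'k) ^ (q ^ n) = x ^ (q ^ n) + y ^ (q ^ n)"
proof -
  have "q ^ n = CHAR('k) ^ (m * n)" using q_def char by (simp add: power_mult)
  then show ?thesis using freshmans_dream'[OF char_prime] by blast
qed

lemma pw_diff: "(x :: 'k) ^ (q ^ n) - y ^ (q ^ n) = (x - y) ^ (q ^ n)"
  using pw_add[of "x - y" y n] by simp

lemma pw_inj: "(x :: 'k) ^ (q ^ n) = y ^ (q ^ n) \<Longrightarrow> x = y"
  using pw_diff[of x n y] by simp

lemma pw_inj1: "(x :: 'k) ^ q = y ^ q \<Longrightarrow> x = y"
  using pw_inj[of x 1 y] by simp

lemma qn_odd: "odd (q ^ n)" using q_odd by simp

lemma pw_m1: "(-1 :: 'k) ^ (q ^ n) = -1"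
  using qn_odd by simp

lemma pw_pw: "((x :: 'k) ^ (q ^ a)) ^ (q ^ b) = x ^ (q ^ (a + b))"
  by (simp add: power_mult power_add mult.commute)

lemma pw_Suc: "(x :: 'k) ^ (q ^ Suc n) = (x ^ (q ^ n)) ^ q"
proof -
  have "q ^ Suc n = q ^ n * q" by simp
  then show ?thesis by (simp only: power_mult)
qed

lemma of_nat_pw: "(of_nat a :: 'k) ^ q = of_nat a"
proof (induction a)
  case (Suc a)
  have "(of_nat (Suc a) :: 'k) ^ q = (of_nat a + 1) ^ (q ^ 1)" by (simp add: add.commute)
  also have "\<dots> = of_nat a ^ q + 1" using pw_add[of "of_nat a" 1 1] by simp
  finally show ?case using Suc by simp
next
  case 0 then show ?case using q_pos by simp
qed

lemma poly_pw:
  assumes "\<forall>i. coeff P i \<in> range (of_nat :: nat \<Rightarrow> 'k)"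
  shows "poly P (x ^ q) = (poly P x) ^ q"
proof -
  have "(poly P x) ^ q = (\<Sum>i\<le>degree P. coeff P i * x ^ i) ^ (q ^ 1)"
    by (simp add: poly_altdef)
  also have "\<dots> = (\<Sum>i\<le>degree P. (coeff P i * x ^ i) ^ (q ^ 1))"
    using freshmans_dream_sum'[OF char_prime, of "q ^ 1" m] q_def char by simp
  also have "\<dots> = (\<Sum>i\<le>degree P. coeff P i * (x ^ q) ^ i)"
  proof (rule sum.cong[OF refl])
    fix i
    obtain a where "coeff P i = of_nat a" using assms by blast
    then show "(coeff P i * x ^ i) ^ (q ^ 1) = coeff P i * (x ^ q) ^ i"
      by (simp add: power_mult_distrib of_nat_pw flip: power_mult) (simp add: mult.commute)
  qed
  finally show ?thesis by (simp add: poly_altdef)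
qed

lemma per_exists: "\<exists>n>0. (x :: 'k) ^ (q ^ n) = x"
proof -
  obtain P :: "'k poly" where P: "P \<noteq> 0" "\<forall>i. coeff P i \<in> range of_nat" "poly P x = 0"
    using alg unfolding algebraic_over_prime_field_def by blast
  define R where "R = {y. poly P y = 0}"
  have fin: "finite R" unfolding R_def using P(1) poly_roots_finite by blast
  have inR: "x ^ (q ^ i) \<in> R" for i
  proof (induction i)
    case 0 then show ?case using P by (simp add: R_def)
  next
    case (Suc i)
    then show ?case unfolding R_def mem_Collect_eq pw_Suc poly_pw[OF P(2)] using q_pos by (simp add: R_def)
  qed
  have "\<not> inj (\<lambda>i::nat. x ^ (q ^ i))"
  proof
    assume "inj (\<lambda>i::nat. x ^ (q ^ i))"
    then have "infinite (range (\<lambda>i::nat. x ^ (q ^ i)))"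
      using range_inj_infinite by blast
    moreover have "range (\<lambda>i::nat. x ^ (q ^ i)) \<subseteq> R" using inR by blast
    ultimately show False using fin finite_subset by blast
  qed
  then obtain i j where ij: "i \<noteq> j" "x ^ (q ^ i) = x ^ (q ^ j)" unfolding inj_def by blast
  show ?thesis
  proof (cases "i < j")
    case True
    have "(x ^ (q ^ (j - i))) ^ (q ^ i) = x ^ (q ^ i)"
      using ij True by (simp add: pw_pw)
    then have "x ^ (q ^ (j - i)) = x" by (rule pw_inj)
    then show ?thesis using True by (intro exI[of _ "j - i"]) auto
  next
    case False
    then have T: "j < i" using ij by simp
    have "(x ^ (q ^ (i - j))) ^ (q ^ j) = x ^ (q ^ j)"
      using ij T by (simp add: pw_pw)
    then have "x ^ (q ^ (i - j)) = x" by (rule pw_inj)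
    then show ?thesis using T by (intro exI[of _ "i - j"]) auto
  qed
qed

definition per :: "'k \<Rightarrow> nat" where
  "per x = (LEAST n. n > 0 \<and> x ^ (q ^ n) = x)"

lemma per_props: "per x > 0" "x ^ (q ^ per x) = x"
  using LeastI_ex[OF per_exists[of x]] unfolding per_def by auto

lemma per_least: "0 < n \<Longrightarrow> n < per x \<Longrightarrow> x ^ (q ^ n) \<noteq> x"
  unfolding per_def using not_less_Least by blast

lemma pw_mult_per: "x ^ (q ^ (per x * a)) = x"
proof (induction a)
  case (Suc a)
  have "x ^ (q ^ (per x * Suc a)) = (x ^ (q ^ (per x * a))) ^ (q ^ per x)"
    by (simp add: pw_pw add.commute)
  then show ?case using Suc per_props by simp
qed simp

lemma pw_mod: "x ^ (q ^ t) = x ^ (q ^ (t mod per x))"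
proof -
  have "t = per x * (t div per x) + t mod per x" by simp
  then have "x ^ (q ^ t) = (x ^ (q ^ (per x * (t div per x)))) ^ (q ^ (t mod per x))"
    using pw_pw[of x "per x * (t div per x)" "t mod per x"] by simp
  then show ?thesis by (simp add: pw_mult_per)
qed

lemma fix_iff: "x ^ (q ^ t) = x \<longleftrightarrow> per x dvd t"
proof
  assume a: "x ^ (q ^ t) = x"
  have "x ^ (q ^ (t mod per x)) = x" using a pw_mod by metis
  moreover have "t mod per x < per x" using per_props by simp
  ultimately have "t mod per x = 0" using per_least by (metis neq0_conv)
  then show "per x dvd t" by auto
next
  assume "per x dvd t"
  then show "x ^ (q ^ t) = x" using pw_mult_per by auto
qed

lemma eq_iff_aux: "a < per x \<Longrightarrow> b < per x \<Longrightarrow> a \<le> b \<Longrightarrow> x ^ (q ^ a) = x ^ (q ^ b) \<Longrightarrow> a = b"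
proof -
  assume h: "a < per x" "b < per x" "a \<le> b" "x ^ (q ^ a) = x ^ (q ^ b)"
  have "(x ^ (q ^ (b - a))) ^ (q ^ a) = x ^ (q ^ a)" using h by (simp add: pw_pw)
  then have "x ^ (q ^ (b - a)) = x" by (rule pw_inj)
  then have "per x dvd (b - a)" using fix_iff by blast
  moreover have "b - a < per x" using h by linarith
  ultimately have "b - a = 0" using dvd_imp_le by (metis not_gr0 not_le)
  then show "a = b" using h by simp
qed

lemma eq_iff: "x ^ (q ^ s) = x ^ (q ^ t) \<longleftrightarrow> s mod per x = t mod per x"
proof
  assume "x ^ (q ^ s) = x ^ (q ^ t)"
  then have e: "x ^ (q ^ (s mod per x)) = x ^ (q ^ (t mod per x))" using pw_mod by metis
  have l: "s mod per x < per x" "t mod per x < per x" using per_props by auto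
  show "s mod per x = t mod per x"
  proof (cases "s mod per x \<le> t mod per x")
    case True then show ?thesis using eq_iff_aux l e by blast
  next
    case False then show ?thesis using eq_iff_aux[of "t mod per x" x "s mod per x"] l e by simp
  qed
next
  assume "s mod per x = t mod per x"
  then show "x ^ (q ^ s) = x ^ (q ^ t)" using pw_mod by metis
qed

end

context frob
begin

definition gorb :: "'k \<Rightarrow> 'k set" where
  "gorb x = range (\<lambda>i. x ^ (q ^ i))"

lemma gorb_self: "x \<in> gorb x"
  unfolding gorb_def by (rule range_eqI[of _ _ 0]) simp

lemma gorb_pw: "y \<in> gorb x \<Longrightarrow> y ^ q \<in> gorb x"
  unfolding gorb_def by (auto simp: pw_Suc[symmetric] simp del: power_Suc)

lemma gorb_root: "y \<in> gorb x \<Longrightarrow> y = z ^ q \<Longrightarrow> z \<in> gorb x"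
proof -
  assume "y \<in> gorb x" "y = z ^ q"
  then obtain i where i: "y = x ^ (q ^ i)" unfolding gorb_def by blast
  have "x ^ (q ^ i) = x ^ (q ^ (i + per x))" using eq_iff by simp
  also have "i + per x = Suc (i + per x - 1)" using per_props by simp
  finally have "z ^ q = (x ^ (q ^ (i + per x - 1))) ^ q" using i \<open>y = z ^ q\<close> pw_Suc by metis
  then have "z = x ^ (q ^ (i + per x - 1))" by (rule pw_inj1)
  then show ?thesis unfolding gorb_def by blast
qed

lemma gorb_inverse: "y \<in> gorb x \<Longrightarrow> inverse y \<in> gorb (inverse x)"
  unfolding gorb_def by (auto simp: power_inverse)

lemma gorb_image: "gorb x = (\<lambda>i. x ^ (q ^ i)) ` {..<per x}"
proof
  show "gorb x \<subseteq> (\<lambda>i. x ^ (q ^ i)) ` {..<per x}"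
  proof
    fix y assume "y \<in> gorb x"
    then obtain i where "y = x ^ (q ^ i)" unfolding gorb_def by blast
    then have "y = x ^ (q ^ (i mod per x))" using pw_mod by metis
    moreover have "i mod per x < per x" using per_props by simp
    ultimately show "y \<in> (\<lambda>i. x ^ (q ^ i)) ` {..<per x}" by blast
  qed
qed (auto simp: gorb_def)

lemma gorb_card: "card (gorb x) = per x" and gorb_finite: "finite (gorb x)"
proof -
  have "inj_on (\<lambda>i. x ^ (q ^ i)) {..<per x}"
    by (intro inj_onI) (simp add: eq_iff)
  then show "card (gorb x) = per x" unfolding gorb_image by (simp add: card_image)
  show "finite (gorb x)" unfolding gorb_image by simp
qed

lemma g_orbit_eq: "g_orbit q x = gorb x"
proof
  show "g_orbit q x \<subseteq> gorb x"
  proof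
    fix z assume "z \<in> g_orbit q x"
    then have "(x, z) \<in> (gamma_rel q \<union> (gamma_rel q)\<inverse>)\<^sup>*" unfolding g_orbit_def by simp
    then show "z \<in> gorb x"
    proof (induction rule: rtrancl_induct)
      case base then show ?case by (rule gorb_self)
    next
      case (step y z)
      from step.hyps(2) have "z = y ^ q \<or> y = z ^ q" by (auto simp: gamma_rel_def)
      then show ?case using gorb_pw[OF step.IH] gorb_root[OF step.IH] by blast
    qed
  qed
next
  show "gorb x \<subseteq> g_orbit q x"
  proof
    fix z assume "z \<in> gorb x"
    then obtain i where i: "z = x ^ (q ^ i)" unfolding gorb_def by blast
    have "(x, x ^ (q ^ i)) \<in> (gamma_rel q \<union> (gamma_rel q)\<inverse>)\<^sup>*" for i
    proof (induction i)
      case 0 then show ?case by simp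
    next
      case (Suc i)
      have "(x ^ (q ^ i), x ^ (q ^ Suc i)) \<in> gamma_rel q \<union> (gamma_rel q)\<inverse>"
        by (simp add: gamma_rel_def pw_Suc del: power_Suc)
      then show ?case by (rule rtrancl_into_rtrancl[OF Suc.IH])
    qed
    then show "z \<in> g_orbit q x" unfolding g_orbit_def i by simp
  qed
qed

lemma gorb_class: "y \<in> gorb x \<Longrightarrow> gorb y = gorb x"
  using class_eq[of y "gamma_rel q" x] unfolding g_orbit_eq[symmetric] g_orbit_def by simp

lemma ag_orbit_eq: "ag_orbit q x = gorb x \<union> gorb (inverse x)"
proof
  show "ag_orbit q x \<subseteq> gorb x \<union> gorb (inverse x)"
  proof
    fix z assume "z \<in> ag_orbit q x"
    then have "(x, z) \<in> ((gamma_rel q \<union> alpha_rel) \<union> (gamma_rel q \<union> alpha_rel)\<inverse>)\<^sup>*"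
      unfolding ag_orbit_def by simp
    then show "z \<in> gorb x \<union> gorb (inverse x)"
    proof (induction rule: rtrancl_induct)
      case base then show ?case using gorb_self by blast
    next
      case (step y z)
      have inv: "z \<in> gorb x \<union> gorb (inverse x)" if "z = inverse y" for z
      proof -
        from step.IH show ?thesis
        proof
          assume "y \<in> gorb x" then show ?thesis using gorb_inverse[of y x] that by blast
        next
          assume "y \<in> gorb (inverse x)"
          then have "inverse y \<in> gorb (inverse (inverse x))" by (rule gorb_inverse)
          then show ?thesis using that by simp
        qed
      qed
      from step.hyps(2) consider "z = y ^ q" | "y = z ^ q" | "z = inverse y" | "y = inverse z"
        unfolding gamma_rel_def alpha_rel_def by blast
      then show ?case
      proof cases
        case 1 then show ?thesis using step.IH gorb_pw by blast
      next
        case 2 then show ?thesis using step.IH gorb_root by blast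
      next
        case 3 then show ?thesis using inv by blast
      next
        case 4 then have "z = inverse y" by simp
        then show ?thesis using inv by blast
      qed
    qed
  qed
next
  let ?E = "((gamma_rel q \<union> alpha_rel) \<union> (gamma_rel q \<union> alpha_rel)\<inverse>)\<^sup>*"
  have g: "(a, a ^ (q ^ i)) \<in> ?E" for a :: 'k and i
  proof (induction i)
    case 0 then show ?case by simp
  next
    case (Suc i)
    have "(a ^ (q ^ i), a ^ (q ^ Suc i)) \<in> gamma_rel q"
      by (simp add: gamma_rel_def pw_Suc del: power_Suc)
    then have "(a ^ (q ^ i), a ^ (q ^ Suc i)) \<in> (gamma_rel q \<union> alpha_rel) \<union> (gamma_rel q \<union> alpha_rel)\<inverse>"
      by blast
    then show ?case by (rule rtrancl_into_rtrancl[OF Suc.IH])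
  qed
  have a: "(x, inverse x) \<in> ?E"
    by (rule r_into_rtrancl) (simp add: alpha_rel_def)
  show "gorb x \<union> gorb (inverse x) \<subseteq> ag_orbit q x"
  proof
    fix z assume "z \<in> gorb x \<union> gorb (inverse x)"
    then obtain i where "z = x ^ (q ^ i) \<or> z = (inverse x) ^ (q ^ i)" unfolding gorb_def by blast
    then have "(x, z) \<in> ?E"
    proof
      assume "z = x ^ (q ^ i)" then show ?thesis using g by simp
    next
      assume "z = (inverse x) ^ (q ^ i)" then show ?thesis using rtrancl_trans[OF a g] by simp
    qed
    then show "z \<in> ag_orbit q x" unfolding ag_orbit_def by simp
  qed
qed

lemma ag_class: "y \<in> ag_orbit q (x::'k) \<Longrightarrow> ag_orbit q y = ag_orbit q x"
  unfolding ag_orbit_def by (rule class_eq)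

lemma ag_self: "(x::'k) \<in> ag_orbit q x"
  unfolding ag_orbit_eq using gorb_self by blast

lemma ag_finite: "finite (ag_orbit q (x::'k))"
  unfolding ag_orbit_eq using gorb_finite by blast

lemma tri_iff: "(x::'k) \<in> tri \<longleftrightarrow> x \<noteq> 0 \<and> x \<noteq> 1 \<and> x \<noteq> -1"
  by (simp add: tri_def)

lemma pw_tri: "(x::'k) \<in> tri \<Longrightarrow> x ^ (q ^ i) \<in> tri"
proof -
  assume x: "x \<in> tri"
  have a: "x \<noteq> 0" "x \<noteq> 1" "x \<noteq> -1" using x by (simp_all add: tri_def)
  have b0: "x ^ (q ^ i) \<noteq> 0" using a(1) by simp
  have b1: "x ^ (q ^ i) \<noteq> 1"
  proof
    assume "x ^ (q ^ i) = 1"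
    then have "x ^ (q ^ i) = 1 ^ (q ^ i)" by simp
    then have "x = 1" by (rule pw_inj)
    with a show False by simp
  qed
  have b2: "x ^ (q ^ i) \<noteq> -1"
  proof
    assume "x ^ (q ^ i) = -1"
    then have "x ^ (q ^ i) = (-1) ^ (q ^ i)" using pw_m1[of i] by simp
    then have "x = -1" by (rule pw_inj)
    with a show False by simp
  qed
  show ?thesis using b0 b1 b2 by (simp add: tri_def)
qed

lemma inv_tri: "(x::'k) \<in> tri \<Longrightarrow> inverse x \<in> tri"
proof -
  assume x: "x \<in> tri"
  have a: "x \<noteq> 0" "x \<noteq> 1" "x \<noteq> -1" using x by (simp_all add: tri_def)
  have "inverse x \<noteq> -1"
  proof
    assume "inverse x = -1"
    then have "inverse (inverse x) = inverse (-1::'k)" by simp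
    then have "x = -1" by simp
    with a show False by simp
  qed
  moreover have "inverse x \<noteq> 1" using a by simp
  moreover have "inverse x \<noteq> 0" using a by simp
  ultimately show ?thesis by (simp add: tri_def)
qed

lemma ag_tri: "(x::'k) \<in> tri \<Longrightarrow> ag_orbit q x \<subseteq> tri"
proof
  fix y assume x: "x \<in> tri" and "y \<in> ag_orbit q x"
  then obtain i where "y = x ^ (q ^ i) \<or> y = (inverse x) ^ (q ^ i)"
    unfolding ag_orbit_eq gorb_def by blast
  then show "y \<in> tri" using pw_tri[OF x] pw_tri[OF inv_tri[OF x]] by blast
qed

end

lemma NL1:
  fixes q :: nat assumes "odd q"
  shows "(q ^ (s + d) - 1) div 2 = q ^ d * ((q ^ s - 1) div 2) + (q ^ d - 1) div 2"
proof -
  obtain a where a: "q ^ s = 2 * a + 1" using assms oddE[of "q ^ _"] by (metis even_power)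
  obtain b where b: "q ^ d = 2 * b + 1" using assms oddE[of "q ^ _"] by (metis even_power)
  have "q ^ (s + d) = (2 * a + 1) * (2 * b + 1)" using a b by (simp add: power_add)
  then have "q ^ (s + d) - 1 = 2 * (2 * a * b + a + b)" by (simp add: algebra_simps)
  then show ?thesis using a b by (simp add: algebra_simps)
qed

lemma NL2:
  fixes q :: nat assumes "odd q"
  shows "(q ^ (2 * j) - 1) div 2 = (q ^ j + 1) * ((q ^ j - 1) div 2)"
proof -
  obtain b where b: "q ^ j = 2 * b + 1" using assms oddE[of "q ^ _"] by (metis even_power)
  have "q ^ (2 * j) = (2 * b + 1) * (2 * b + 1)" using b by (simp add: power_mult_distrib mult_2 power_add)
  then have "q ^ (2 * j) - 1 = 2 * ((2 * b + 2) * b)" by (simp add: algebra_simps)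
  then show ?thesis using b by (simp add: algebra_simps)
qed

lemma NL3:
  fixes q :: nat assumes "odd q" "j \<le> t"
  shows "(q ^ t + 1) div 2 = (q ^ j + 1) div 2 + q ^ j * ((q ^ (t - j) - 1) div 2)"
proof -
  obtain a where a: "q ^ (t - j) = 2 * a + 1" using assms oddE[of "q ^ _"] by (metis even_power)
  obtain b where b: "q ^ j = 2 * b + 1" using assms oddE[of "q ^ _"] by (metis even_power)
  have "q ^ t = q ^ j * q ^ (t - j)" using assms(2) by (simp flip: power_add)
  then have "q ^ t + 1 = 2 * (2 * a * b + a + b + 1)" using a b by (simp add: algebra_simps)
  then show ?thesis using a b by (simp add: algebra_simps)
qed

lemma NL_half:
  fixes q :: nat assumes "odd q"
  shows "2 * ((q ^ j - 1) div 2) = q ^ j - 1" "2 * ((q ^ j + 1) div 2) = q ^ j + 1"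
  using assms by (simp_all add: odd_pos)

context frob
begin

definition caseA :: "'k \<Rightarrow> bool" where
  "caseA l \<longleftrightarrow> inverse l \<in> gorb l"

lemma per_inv: "per (inverse x) = per x"
proof -
  have e: "per (inverse x) dvd t \<longleftrightarrow> per x dvd t" for t
    unfolding fix_iff[symmetric] by (simp add: power_inverse)
  show ?thesis using e[of "per x"] e[of "per (inverse x)"] by (simp add: dvd_antisym)
qed

lemma sq_inv: "(l::'k) \<noteq> 0 \<Longrightarrow> inverse l = l \<Longrightarrow> l = 1 \<or> l = -1"
proof -
  assume "l \<noteq> 0" "inverse l = l"
  then have "l ^ 2 = 1" by (metis power2_eq_square right_inverse)
  then show ?thesis by (rule sq1_cases)
qed

lemma tri_not_inv: "(l::'k) \<in> tri \<Longrightarrow> inverse l \<noteq> l"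
  using sq_inv by (auto simp: tri_def)

lemma caseA_struct:
  assumes l: "l \<in> tri" and A: "caseA l"
  shows "\<exists>j. per l = 2 * j \<and> 0 < j \<and> l ^ (q ^ j) = inverse l"
proof -
  obtain i where i: "inverse l = l ^ (q ^ i)" using A unfolding caseA_def gorb_def by blast
  define j where "j = i mod per l"
  have lj: "l ^ (q ^ j) = inverse l" using i pw_mod j_def by metis
  have jl: "j < per l" using per_props j_def by simp
  have j0: "j \<noteq> 0"
  proof
    assume "j = 0"
    then have "inverse l = l" using lj by simp
    then show False using tri_not_inv l by blast
  qed
  have "l ^ (q ^ (j + j)) = l"
    by (simp add: pw_pw[symmetric] lj power_inverse)
  then have "per l dvd 2 * j" using fix_iff by (simp add: mult_2)
  then obtain c where c: "2 * j = per l * c" by blast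
  have "c \<noteq> 0"
  proof
    assume "c = 0" then show False using c j0 by simp
  qed
  moreover have "c < 2"
  proof (rule ccontr)
    assume "\<not> c < 2"
    then have "per l * 2 \<le> per l * c" by simp
    then show False using c jl by linarith
  qed
  ultimately have "c = 1" by simp
  then show ?thesis using c j0 lj by (intro exI[of _ j]) auto
qed

lemma caseA_orbit: "caseA l \<Longrightarrow> ag_orbit q l = gorb l"
  unfolding ag_orbit_eq caseA_def using gorb_class by blast

lemma caseB_disj: "\<not> caseA l \<Longrightarrow> gorb l \<inter> gorb (inverse l) = {}"
proof (rule ccontr)
  assume B: "\<not> caseA l" and "gorb l \<inter> gorb (inverse l) \<noteq> {}"
  then obtain z where z: "z \<in> gorb l" "z \<in> gorb (inverse l)" by blast
  have "gorb l = gorb (inverse l)" using gorb_class[OF z(1)] gorb_class[OF z(2)] by simp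
  then have "inverse l \<in> gorb l" using gorb_self by simp
  then show False using B caseA_def by simp
qed

lemma card_A: "caseA l \<Longrightarrow> card (ag_orbit q l) = per l"
  using caseA_orbit gorb_card by simp

lemma card_B: "\<not> caseA l \<Longrightarrow> card (ag_orbit q l) = 2 * per l"
proof -
  assume B: "\<not> caseA l"
  have "card (ag_orbit q l) = card (gorb l) + card (gorb (inverse l))"
    unfolding ag_orbit_eq using caseB_disj[OF B] gorb_finite by (simp add: card_Un_disjoint)
  then show ?thesis using gorb_card per_inv by simp
qed

lemma card_even_pos:
  assumes "(l::'k) \<in> tri"
  shows "even (card (ag_orbit q l)) \<and> card (ag_orbit q l) > 0"
proof (cases "caseA l")
  case True
  then obtain j where "per l = 2 * j" "0 < j" using caseA_struct assms by blast
  then show ?thesis using card_A[OF True] by simp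
next
  case False
  then show ?thesis using card_B[OF False] per_props by simp
qed

lemma dvd_char:
  assumes l: "(l::'k) \<in> tri"
  shows "card (ag_orbit q l) dvd 2 * t \<longleftrightarrow> (l ^ (q ^ t) = l \<or> l ^ (q ^ t) = inverse l)"
proof (cases "caseA l")
  case True
  then obtain j where j: "per l = 2 * j" "0 < j" "l ^ (q ^ j) = inverse l" using caseA_struct l by blast
  have c: "card (ag_orbit q l) = 2 * j" using card_A[OF True] j by simp
  show ?thesis
  proof
    assume "card (ag_orbit q l) dvd 2 * t"
    then have "j dvd t" using c by simp
    then obtain r where r: "t = j * r" by blast
    show "l ^ (q ^ t) = l \<or> l ^ (q ^ t) = inverse l"
    proof (cases "even r")
      case True
      then obtain s where "r = 2 * s" by blast
      then have "per l dvd t" using r j by simp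
      then show ?thesis using fix_iff by blast
    next
      case False
      then obtain s where "r = 2 * s + 1" using oddE by blast
      then have "t = j + (2 * j) * s" using r by (simp add: algebra_simps)
      then have "t mod per l = j" using j by simp
      then have "l ^ (q ^ t) = l ^ (q ^ j)" using pw_mod by metis
      then show ?thesis using j by simp
    qed
  next
    assume "l ^ (q ^ t) = l \<or> l ^ (q ^ t) = inverse l"
    then show "card (ag_orbit q l) dvd 2 * t"
    proof
      assume "l ^ (q ^ t) = l"
      then have "2 * j dvd t" using fix_iff j by simp
      then show ?thesis using c by auto
    next
      assume "l ^ (q ^ t) = inverse l"
      then have "l ^ (q ^ t) = l ^ (q ^ j)" using j by simp
      then have "t mod per l = j mod per l" by (simp only: eq_iff)
      then have "t mod (2 * j) = j mod (2 * j)" using j by simp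
      then have tm: "t mod (2 * j) = j" using j by simp
      have "t = 2 * j * (t div (2 * j)) + t mod (2 * j)" by simp
      then have "t = j * (2 * (t div (2 * j)) + 1)" using tm by (simp add: algebra_simps)
      then have "j dvd t" by (metis dvd_triv_left)
      then show ?thesis using c by simp
    qed
  qed
next
  case False
  have c: "card (ag_orbit q l) = 2 * per l" using card_B[OF False] .
  have ni: "l ^ (q ^ t) \<noteq> inverse l"
  proof
    assume "l ^ (q ^ t) = inverse l"
    then have "inverse l \<in> gorb l" unfolding gorb_def by (metis rangeI)
    then show False using False caseA_def by simp
  qed
  show ?thesis using c ni fix_iff by simp
qed

end

lemma pow_lin1: "(x::'a::comm_monoid_mult) ^ (a * e + b) = (x ^ e) ^ a * x ^ b"
proof -
  have "x ^ (a * e + b) = x ^ (e * a) * x ^ b" by (simp only: power_add mult.commute)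
  then show ?thesis by (simp only: power_mult)
qed
lemma pow_lin2: "(x::'a::comm_monoid_mult) ^ (b + a * e) = x ^ b * (x ^ e) ^ a"
  using pow_lin1[of x a e b] by (simp add: add.commute mult.commute)
lemma pow_sq: "((x::'a::comm_monoid_mult) ^ e) ^ 2 = x ^ (2 * e)"
  by (simp only: power_mult[symmetric] mult.commute)

context frob
begin

definition sg :: "'k \<Rightarrow> rat" where
  "sg v = (if v = 1 then 1 else -1)"

lemma sg_1: "sg 1 = 1" by (simp add: sg_def)
lemma sg_m1: "sg (-1) = -1" using one_neq_m1 by (simp add: sg_def)

lemma sg_sq: "(sg v)^2 = 1" by (simp add: sg_def)

lemma sg_pow: "(v::'k)^2 = 1 \<Longrightarrow> sg (v ^ a) = (sg v) ^ a"
proof -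
  assume "v^2 = 1"
  then have "v = 1 \<or> v = -1" by (rule sq1_cases)
  then show ?thesis
  proof
    assume "v = 1" then show ?thesis by (simp add: sg_1)
  next
    assume v: "v = -1"
    show ?thesis
    proof (cases "even a")
      case True then show ?thesis using v by (simp add: sg_1 sg_m1)
    next
      case False then show ?thesis using v by (simp add: sg_m1)
    qed
  qed
qed

lemma sq_pw_odd: "(v::'k)^2 = 1 \<Longrightarrow> v ^ (q ^ i) = v"
  using sq1_pow_odd qn_odd by blast

definition FF :: "nat \<Rightarrow> 'k \<Rightarrow> rat" where
  "FF t x = (if x ^ (q ^ t) = x then sg (x ^ ((q ^ t - 1) div 2)) else - sg (x ^ ((q ^ t + 1) div 2)))"

definition sgnO :: "'k \<Rightarrow> rat" where
  "sgnO l = (if caseA l then - sg (l ^ ((q ^ (card (ag_orbit q l) div 2) + 1) div 2))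
             else sg (l ^ ((q ^ (card (ag_orbit q l) div 2) - 1) div 2)))"

lemma sqA: "(x::'k) \<noteq> 0 \<Longrightarrow> x ^ (q ^ d) = x \<Longrightarrow> (x ^ ((q ^ d - 1) div 2))^2 = 1"
proof -
  assume x: "x \<noteq> 0" "x ^ (q ^ d) = x"
  have "(x ^ ((q ^ d - 1) div 2))^2 = x ^ (2 * ((q ^ d - 1) div 2))" by (rule pow_sq)
  also have "\<dots> = x ^ (q ^ d - 1)" using NL_half[OF q_odd] by simp
  finally have e: "(x ^ ((q ^ d - 1) div 2))^2 = x ^ (q ^ d - 1)" .
  have "x ^ (q ^ d - 1) * x = x ^ (q ^ d)" using q_pos by (simp add: power_Suc2[symmetric])
  then have "x ^ (q ^ d - 1) * x = 1 * x" using x by simp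
  then have "x ^ (q ^ d - 1) = 1" using x(1) by (metis mult_right_cancel)
  then show ?thesis using e by simp
qed

lemma sqB: "(x::'k) \<noteq> 0 \<Longrightarrow> x ^ (q ^ d) = inverse x \<Longrightarrow> (x ^ ((q ^ d + 1) div 2))^2 = 1"
proof -
  assume x: "x \<noteq> 0" "x ^ (q ^ d) = inverse x"
  have "(x ^ ((q ^ d + 1) div 2))^2 = x ^ (2 * ((q ^ d + 1) div 2))" by (rule pow_sq)
  also have "\<dots> = x ^ (q ^ d + 1)" using NL_half[OF q_odd] by simp
  also have "\<dots> = 1" using x by simp
  finally show ?thesis .
qed

lemma K2:
  assumes x: "(x::'k) \<noteq> 0" "x ^ (q ^ d) = x"
  shows "x ^ ((q ^ (d * a) - 1) div 2) = (x ^ ((q ^ d - 1) div 2)) ^ a"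
proof (induction a)
  case 0 then show ?case by simp
next
  case (Suc a)
  define w where "w = x ^ ((q ^ d - 1) div 2)"
  have w2: "w^2 = 1" unfolding w_def using sqA x by blast
  have wa2: "(w ^ a)^2 = 1"
  proof -
    have "(w ^ a)^2 = (w^2)^a" by (simp only: power_mult[symmetric] mult.commute)
    then show ?thesis using w2 by simp
  qed
  have da: "d * Suc a = d * a + d" by simp
  have e: "(q ^ (d * Suc a) - 1) div 2 = q ^ d * ((q ^ (d * a) - 1) div 2) + (q ^ d - 1) div 2"
    unfolding da by (rule NL1[OF q_odd])
  have "x ^ ((q ^ (d * Suc a) - 1) div 2) = (x ^ ((q ^ (d * a) - 1) div 2)) ^ (q ^ d) * w"
    unfolding e w_def by (rule pow_lin1)
  also have "\<dots> = (w ^ a) ^ (q ^ d) * w" using Suc w_def by simp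
  also have "\<dots> = w ^ a * w" using sq_pw_odd[OF wa2] by simp
  finally show ?case by (simp add: w_def mult.commute)
qed

lemma sign_lemma:
  assumes l: "(l::'k) \<in> tri" and t: "0 < t" and dv: "card (ag_orbit q l) dvd 2 * t"
  shows "sgnO l ^ (2 * t div card (ag_orbit q l)) = FF t l"
proof (cases "caseA l")
  case True
  then obtain j where j: "per l = 2 * j" "0 < j" "l ^ (q ^ j) = inverse l" using caseA_struct l by blast
  have c: "card (ag_orbit q l) = 2 * j" using card_A[OF True] j by simp
  have l0: "l \<noteq> 0" using l by (simp add: tri_def)
  define v where "v = l ^ ((q ^ j + 1) div 2)"
  have v2: "v^2 = 1" unfolding v_def using sqB[OF l0 j(3)] .
  have sO: "sgnO l = - sg v" unfolding sgnO_def v_def using True c by simp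
  have msq: "(- sg v)^2 = 1" using sg_sq by simp
  have jt: "j dvd t" using dv c by simp
  then obtain r where r: "t = j * r" by blast
  have rr: "2 * t div card (ag_orbit q l) = r" using c r j by simp
  have l2j: "l ^ (q ^ (2 * j)) = l" using fix_iff j by simp
  have w1: "l ^ ((q ^ (2 * j) - 1) div 2) = 1"
  proof -
    have "l ^ ((q ^ (2 * j) - 1) div 2) = (l ^ (q ^ j + 1)) ^ ((q ^ j - 1) div 2)"
      unfolding NL2[OF q_odd] by (rule power_mult)
    also have "l ^ (q ^ j + 1) = 1" using j(3) l0 by simp
    finally show ?thesis by simp
  qed
  have K: "l ^ ((q ^ (2 * j * s) - 1) div 2) = 1" for s
    using K2[OF l0 l2j, of s] w1 by simp
  show ?thesis
  proof (cases "even r")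
    case True
    then obtain s where s: "r = 2 * s" by blast
    have fx: "l ^ (q ^ t) = l" using fix_iff j r s by simp
    have ts: "t = 2 * j * s" using r s by simp
    have "FF t l = 1" unfolding FF_def using fx K[of s] unfolding ts by (simp add: sg_1)
    moreover have "sgnO l ^ r = 1" unfolding sO s using msq by (simp add: power_mult)
    ultimately show ?thesis using rr by simp
  next
    case False
    then obtain s where s: "r = 2 * s + 1" using oddE by blast
    have "t = j + (2 * j) * s" using r s by (simp add: algebra_simps)
    then have "t mod per l = j" using j by simp
    then have inv: "l ^ (q ^ t) = inverse l" using pw_mod j by metis
    have nf: "l ^ (q ^ t) \<noteq> l" using inv tri_not_inv[OF l] by simp
    have jt': "j \<le> t" using r s by simp
    have tj: "t - j = 2 * j * s" using r s by (simp add: algebra_simps)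
    have "l ^ ((q ^ t + 1) div 2) = v * (l ^ ((q ^ (t - j) - 1) div 2)) ^ (q ^ j)"
      unfolding v_def NL3[OF q_odd jt'] by (rule pow_lin2)
    also have "\<dots> = v" using K[of s] tj by simp
    finally have "FF t l = - sg v" unfolding FF_def using nf by simp
    moreover have "sgnO l ^ r = - sg v" unfolding sO using sq1_pow_odd[OF msq, of r] \<open>\<not> even r\<close> by blast
    ultimately show ?thesis using rr by simp
  qed
next
  case False
  have c: "card (ag_orbit q l) = 2 * per l" using card_B[OF False] .
  have l0: "l \<noteq> 0" using l by (simp add: tri_def)
  define w where "w = l ^ ((q ^ per l - 1) div 2)"
  have w2: "w^2 = 1" unfolding w_def using sqA[OF l0 per_props(2)] .
  have sO: "sgnO l = sg w" unfolding sgnO_def w_def using False c by simp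
  have "per l dvd t" using dv c by simp
  then obtain r where r: "t = per l * r" by blast
  have rr: "2 * t div card (ag_orbit q l) = r" using c r per_props by simp
  have fx: "l ^ (q ^ t) = l" using fix_iff r by simp
  have "FF t l = sg (w ^ r)" unfolding FF_def w_def using fx K2[OF l0 per_props(2), of r] r by simp
  also have "\<dots> = (sg w) ^ r" using sg_pow[OF w2] .
  finally show ?thesis using rr sO by simp
qed

end

lemma pow_comm: "((x::'a::comm_monoid_mult) ^ a) ^ b = (x ^ b) ^ a"
  by (simp only: power_mult[symmetric] mult.commute)

lemma roots_card:
  fixes M :: nat
  assumes M: "M > 0" and nz: "(of_nat M :: 'k::alg_closed_field) \<noteq> 0"
  shows "card {x::'k. x ^ M = 1} = M"
proof -
  define P :: "'k poly" where "P = [:-1:] + monom 1 M"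
  have degP: "degree P = M" unfolding P_def using M by (subst degree_add_eq_right) (simp_all add: degree_monom_eq)
  have P0: "P \<noteq> 0" using degP M by auto
  have lc: "lead_coeff P = 1" using degP M by (cases M) (simp_all add: P_def)
  have polyP: "poly P x = x ^ M - 1" for x by (simp add: P_def poly_monom)
  obtain A where A: "size A = degree P" "P = smult (lead_coeff P) (\<Prod>x\<in>#A. [:-x, 1:])"
    using alg_closed_imp_factorization[OF P0] by blast
  have PA: "P = (\<Prod>x\<in>#A. [:-x, 1:])" using A(2) lc by simp
  have roots: "{x::'k. x ^ M = 1} = set_mset A"
  proof -
    have "poly P x = 0 \<longleftrightarrow> x \<in># A" for x
    proof -
      have "poly P x = (\<Prod>a\<in>#A. poly [:-a, 1:] x)" unfolding PA by (rule poly_prod_mset)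
      also have "\<dots> = 0 \<longleftrightarrow> 0 \<in># image_mset (\<lambda>a. poly [:-a, 1:] x) A" by (rule prod_mset_zero_iff)
      also have "\<dots> \<longleftrightarrow> x \<in># A" by auto
      finally show ?thesis .
    qed
    then show ?thesis using polyP by auto
  qed
  have cnt: "count A a \<le> 1" for a
  proof (rule ccontr)
    assume "\<not> count A a \<le> 1"
    then have c2: "count A a \<ge> 2" by linarith
    have aA: "a \<in># A" using c2 by (simp add: count_greater_zero_iff[symmetric] del: count_greater_zero_iff)
    obtain A' where A': "A = add_mset a A'" using multi_member_split[OF aA] by blast
    have aA': "a \<in># A'" using c2 A' by (simp add: count_greater_zero_iff[symmetric] del: count_greater_zero_iff)
    obtain B where B: "A' = add_mset a B" using multi_member_split[OF aA'] by blast
    define f :: "'k poly" where "f = [:-a, 1:]"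
    define Q where "Q = (\<Prod>x\<in>#B. [:-x, 1:])"
    have PfQ: "P = f * (f * Q)" unfolding PA A' B f_def Q_def by simp
    have fa: "poly f a = 0" by (simp add: f_def)
    have "poly (pderiv P) a = 0"
      unfolding PfQ pderiv_mult by (simp add: fa)
    moreover have "poly (pderiv P) a = of_nat M * a ^ (M - 1)"
      by (simp add: P_def pderiv_add pderiv_monom poly_monom)
    moreover have "a \<in> {x. x ^ M = 1}" unfolding roots using aA by simp
    then have "a ^ M = 1" by simp
    then have "a \<noteq> 0"
    proof -
      assume aM: "a ^ M = 1"
      show "a \<noteq> 0"
      proof
        assume "a = 0" then have "a ^ M = 0" using M by simp
        with aM show False by simp
      qed
    qed
    ultimately show False using nz by simp
  qed
  have "card (set_mset A) = size A"
  proof -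
    have "size A = sum (count A) (set_mset A)" by (rule size_multiset_overloaded_eq)
    also have "\<dots> = sum (\<lambda>_. 1) (set_mset A)"
    proof (rule sum.cong[OF refl])
      fix x assume "x \<in> set_mset A"
      then have "0 < count A x" by simp
      then show "count A x = 1" using cnt[of x] by linarith
    qed
    finally show ?thesis by simp
  qed
  then show ?thesis using roots A(1) degP by simp
qed

context frob
begin

lemma pw_comm_t: "((x::'k) ^ (q ^ i)) ^ (q ^ t) = (x ^ (q ^ t)) ^ (q ^ i)"
  by (simp add: pw_pw add.commute)

definition Sc :: "nat \<Rightarrow> 'k \<Rightarrow> bool" where
  "Sc t x \<longleftrightarrow> x \<noteq> 0 \<and> (x ^ (q ^ t) = x \<or> x ^ (q ^ t) = inverse x)"

lemma inv_sq1: "(v::'k)^2 = 1 \<Longrightarrow> inverse v = v"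
  using sq1_cases by fastforce

lemma FF_pw:
  assumes S: "Sc t x"
  shows "FF t (x ^ (q ^ i)) = FF t x \<and> Sc t (x ^ (q ^ i))"
proof -
  have x0: "x \<noteq> 0" using S Sc_def by simp
  have fixiff: "(x ^ (q ^ i)) ^ (q ^ t) = x ^ (q ^ i) \<longleftrightarrow> x ^ (q ^ t) = x"
  proof
    assume "(x ^ (q ^ i)) ^ (q ^ t) = x ^ (q ^ i)"
    then have "(x ^ (q ^ t)) ^ (q ^ i) = x ^ (q ^ i)" using pw_comm_t[of x i t] by simp
    then show "x ^ (q ^ t) = x" by (rule pw_inj)
  next
    assume "x ^ (q ^ t) = x"
    have "(x ^ (q ^ i)) ^ (q ^ t) = (x ^ (q ^ t)) ^ (q ^ i)" by (rule pw_comm_t)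
    then show "(x ^ (q ^ i)) ^ (q ^ t) = x ^ (q ^ i)" using \<open>x ^ (q ^ t) = x\<close> by simp
  qed
  show ?thesis
  proof (cases "x ^ (q ^ t) = x")
    case True
    have v2: "(x ^ ((q ^ t - 1) div 2))^2 = 1" using sqA[OF x0 True] .
    have "(x ^ (q ^ i)) ^ ((q ^ t - 1) div 2) = (x ^ ((q ^ t - 1) div 2)) ^ (q ^ i)" by (rule pow_comm)
    also have "\<dots> = x ^ ((q ^ t - 1) div 2)" using sq_pw_odd[OF v2] .
    finally show ?thesis using True fixiff x0 unfolding FF_def Sc_def by simp
  next
    case False
    then have inv: "x ^ (q ^ t) = inverse x" using S Sc_def by simp
    have v2: "(x ^ ((q ^ t + 1) div 2))^2 = 1" using sqB[OF x0 inv] .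
    have "(x ^ (q ^ i)) ^ ((q ^ t + 1) div 2) = (x ^ ((q ^ t + 1) div 2)) ^ (q ^ i)" by (rule pow_comm)
    also have "\<dots> = x ^ ((q ^ t + 1) div 2)" using sq_pw_odd[OF v2] .
    finally have e: "(x ^ (q ^ i)) ^ ((q ^ t + 1) div 2) = x ^ ((q ^ t + 1) div 2)" .
    have "(x ^ (q ^ i)) ^ (q ^ t) = (x ^ (q ^ t)) ^ (q ^ i)" by (rule pw_comm_t)
    then have "(x ^ (q ^ i)) ^ (q ^ t) = inverse (x ^ (q ^ i))"
      using inv by (simp add: power_inverse)
    then show ?thesis using False fixiff x0 e unfolding FF_def Sc_def by simp
  qed
qed

lemma FF_inv:
  assumes S: "Sc t x"
  shows "FF t (inverse x) = FF t x \<and> Sc t (inverse x)"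
proof -
  have x0: "x \<noteq> 0" using S Sc_def by simp
  have e: "(inverse x) ^ (q ^ t) = inverse (x ^ (q ^ t))" by (simp add: power_inverse)
  have fixiff: "(inverse x) ^ (q ^ t) = inverse x \<longleftrightarrow> x ^ (q ^ t) = x" unfolding e by simp
  show ?thesis
  proof (cases "x ^ (q ^ t) = x")
    case True
    have v2: "(x ^ ((q ^ t - 1) div 2))^2 = 1" using sqA[OF x0 True] .
    have "(inverse x) ^ ((q ^ t - 1) div 2) = x ^ ((q ^ t - 1) div 2)"
      using inv_sq1[OF v2] by (simp add: power_inverse)
    then show ?thesis using True fixiff x0 unfolding FF_def Sc_def by simp
  next
    case False
    then have inv: "x ^ (q ^ t) = inverse x" using S Sc_def by simp
    have v2: "(x ^ ((q ^ t + 1) div 2))^2 = 1" using sqB[OF x0 inv] .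
    have "(inverse x) ^ ((q ^ t + 1) div 2) = x ^ ((q ^ t + 1) div 2)"
      using inv_sq1[OF v2] by (simp add: power_inverse)
    moreover have "(inverse x) ^ (q ^ t) = inverse (inverse x)" using e inv by simp
    ultimately show ?thesis using False fixiff x0 unfolding FF_def Sc_def by simp
  qed
qed

lemma FF_orbit:
  assumes S: "Sc t l" and y: "y \<in> ag_orbit q l"
  shows "FF t y = FF t l"
proof -
  obtain i where "y = l ^ (q ^ i) \<or> y = (inverse l) ^ (q ^ i)"
    using y unfolding ag_orbit_eq gorb_def by blast
  then show ?thesis
  proof
    assume "y = l ^ (q ^ i)" then show ?thesis using FF_pw[OF S] by simp
  next
    assume "y = (inverse l) ^ (q ^ i)"
    then show ?thesis using FF_pw[of t "inverse l" i] FF_inv[OF S] by simp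
  qed
qed

lemma Omega'_iff:
  assumes l: "l \<in> tri"
  shows "ag_orbit q l \<in> Omega' q \<longleftrightarrow> caseA l"
proof
  assume "ag_orbit q l \<in> Omega' q"
  then obtain x where x: "x \<in> ag_orbit q l" "ag_orbit q l = g_orbit q x"
    unfolding Omega'_def by blast
  have gx: "ag_orbit q l = gorb x" using x g_orbit_eq by simp
  have "l \<in> gorb x" using gx ag_self by metis
  then have gl: "gorb l = gorb x" by (rule gorb_class)
  have "inverse l \<in> ag_orbit q l" unfolding ag_orbit_eq using gorb_self by blast
  then show "caseA l" unfolding caseA_def using gx gl by simp
next
  assume A: "caseA l"
  have "ag_orbit q l \<in> Omega q" unfolding Omega_def using l by blast
  moreover have "ag_orbit q l = g_orbit q l" using caseA_orbit[OF A] g_orbit_eq by simp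
  ultimately show "ag_orbit q l \<in> Omega' q" unfolding Omega'_def using ag_self by blast
qed

lemma Omega_rep:
  assumes Ob: "Ob \<in> (Omega q :: 'k set set)"
  shows "(SOME l. l \<in> Ob) \<in> Ob \<and> (SOME l. l \<in> Ob) \<in> tri \<and> ag_orbit q (SOME l. l \<in> Ob) = Ob"
proof -
  obtain x where x: "x \<in> tri" "Ob = ag_orbit q x" using Ob unfolding Omega_def by blast
  have "x \<in> Ob" using x ag_self by simp
  then have l0: "(SOME l. l \<in> Ob) \<in> Ob" by (rule someI)
  then have "ag_orbit q (SOME l. l \<in> Ob) = Ob" using x ag_class by simp
  moreover have "(SOME l. l \<in> Ob) \<in> tri" using l0 x ag_tri by blast
  ultimately show ?thesis using l0 by simp
qed

lemma sign_O:
  assumes Ob: "Ob \<in> (Omega q :: 'k set set)"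
  shows "(-1::rat) ^ (jO q Ob + epsO q Ob) = sgnO (SOME l. l \<in> Ob)"
proof -
  define l0 where "l0 = (SOME l. l \<in> Ob)"
  have r: "l0 \<in> Ob" "l0 \<in> tri" "ag_orbit q l0 = Ob" using Omega_rep[OF Ob] l0_def by auto
  have om: "Ob \<in> Omega' q \<longleftrightarrow> caseA l0" using Omega'_iff[OF r(2)] r(3) by simp
  have sgv: "(-1::rat) ^ (if v = 1 then 0 else 1) = sg v" for v :: 'k by (simp add: sg_def)
  show ?thesis
  proof (cases "caseA l0")
    case True
    have "(-1::rat) ^ (jO q Ob + epsO q Ob) = - sg (l0 ^ ((q ^ (card Ob div 2) + 1) div 2))"
      unfolding jO_def epsO_def Let_def l0_def[symmetric] using om True sgv by (simp add: power_add)
    then show ?thesis unfolding sgnO_def l0_def[symmetric] using True r(3) by simp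
  next
    case False
    have "(-1::rat) ^ (jO q Ob + epsO q Ob) = sg (l0 ^ ((q ^ (card Ob div 2) - 1) div 2))"
      unfolding jO_def epsO_def Let_def l0_def[symmetric] using om False sgv by (simp add: power_add)
    then show ?thesis unfolding sgnO_def l0_def[symmetric] using False r(3) by simp
  qed
qed

lemma Omega_card: "Ob \<in> (Omega q :: 'k set set) \<Longrightarrow> even (card Ob) \<and> card Ob > 0"
  using Omega_rep card_even_pos by metis

lemma orbit_term:
  assumes Ob: "Ob \<in> (Omega q :: 'k set set)" and t: "0 < t" and dv: "card Ob dvd 2 * t" and y: "y \<in> Ob"
  shows "((-1::rat) ^ (jO q Ob + epsO q Ob)) ^ (2 * t div card Ob) = FF t y"
proof -
  define l0 where "l0 = (SOME l. l \<in> Ob)"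
  have r: "l0 \<in> Ob" "l0 \<in> tri" "ag_orbit q l0 = Ob" using Omega_rep[OF Ob] l0_def by auto
  have "((-1::rat) ^ (jO q Ob + epsO q Ob)) ^ (2 * t div card Ob) = sgnO l0 ^ (2 * t div card (ag_orbit q l0))"
    using sign_O[OF Ob] r(3) l0_def by simp
  also have "\<dots> = FF t l0" using sign_lemma[OF r(2) t] dv r(3) by simp
  also have "\<dots> = FF t y"
  proof -
    have "Sc t l0" using dvd_char[OF r(2)] dv r(2) r(3) by (simp add: Sc_def tri_def)
    then show ?thesis using FF_orbit y r(3) by simp
  qed
  finally show ?thesis .
qed

end

lemma NL4:
  fixes q :: nat assumes "odd q"
  shows "(-1::rat) ^ ((q ^ t - 1) div 2) = ((-1) ^ ((q - 1) div 2)) ^ t"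
proof (induction t)
  case 0 then show ?case by simp
next
  case (Suc t)
  have e: "(q ^ (Suc t) - 1) div 2 = q * ((q ^ t - 1) div 2) + (q - 1) div 2"
    using NL1[OF assms, of t 1] by simp
  have "(-1::rat) ^ ((q ^ (Suc t) - 1) div 2) = ((-1) ^ ((q ^ t - 1) div 2)) ^ q * (-1) ^ ((q - 1) div 2)"
    unfolding e by (rule pow_lin1)
  also have "((-1::rat) ^ ((q ^ t - 1) div 2)) ^ q = (-1) ^ ((q ^ t - 1) div 2)"
  proof (rule sq1_pow_odd)
    have "((-1::rat) ^ ((q ^ t - 1) div 2)) ^ 2 = ((-1) ^ 2) ^ ((q ^ t - 1) div 2)" by (rule pow_comm)
    then show "((-1::rat) ^ ((q ^ t - 1) div 2)) ^ 2 = 1" by simp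
  qed (simp add: assms)
  finally show ?case using Suc by simp
qed

context frob
begin

definition St :: "nat \<Rightarrow> 'k set" where
  "St t = {x \<in> tri. x ^ (q ^ t) = x \<or> x ^ (q ^ t) = inverse x}"

definition Om :: "nat \<Rightarrow> 'k set set" where
  "Om t = {Ob \<in> Omega q. card Ob dvd 2 * t}"

lemma Union_Om: "\<Union> (Om t) = St t"
proof
  show "\<Union> (Om t) \<subseteq> St t"
  proof
    fix y assume "y \<in> \<Union> (Om t)"
    then obtain Ob where Ob: "Ob \<in> Omega q" "card Ob dvd 2 * t" "y \<in> Ob" unfolding Om_def by blast
    define l0 where "l0 = (SOME l. l \<in> Ob)"
    have r: "l0 \<in> Ob" "l0 \<in> tri" "ag_orbit q l0 = Ob" using Omega_rep[OF Ob(1)] l0_def by auto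
    have yt: "y \<in> tri" using ag_tri[OF r(2)] r(3) Ob(3) by blast
    have "ag_orbit q y = Ob" using ag_class[of y l0] r(3) Ob(3) by simp
    then show "y \<in> St t" using dvd_char[OF yt] Ob(2) yt unfolding St_def by simp
  qed
next
  show "St t \<subseteq> \<Union> (Om t)"
  proof
    fix y assume y: "y \<in> St t"
    then have yt: "y \<in> tri" unfolding St_def by simp
    have "ag_orbit q y \<in> Omega q" unfolding Omega_def using yt by blast
    moreover have "card (ag_orbit q y) dvd 2 * t" using dvd_char[OF yt] y unfolding St_def by simp
    ultimately show "y \<in> \<Union> (Om t)" unfolding Om_def using ag_self by blast
  qed
qed

lemma ofq0: "(of_nat q :: 'k) = 0"
proof -
  have "(of_nat p :: 'k) = 0" using char of_nat_CHAR by metis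
  then show ?thesis using q_def m_pos by simp
qed

lemma ofM: "0 < t \<Longrightarrow> (of_nat (q ^ t - 1) :: 'k) \<noteq> 0 \<and> (of_nat (q ^ t + 1) :: 'k) \<noteq> 0"
proof -
  assume t: "0 < t"
  have z: "(of_nat (q ^ t) :: 'k) = 0" using ofq0 t by (simp add: of_nat_power power_0_left)
  have "q ^ t \<ge> 1" using q_pos by simp
  then have "(of_nat (q ^ t - 1) :: 'k) = of_nat (q ^ t) - 1" by (simp add: of_nat_diff)
  then have a: "(of_nat (q ^ t - 1) :: 'k) = -1" using z by simp
  have b: "(of_nat (q ^ t + 1) :: 'k) = 1" unfolding of_nat_add z by simp
  show ?thesis by (simp only: a b) simp
qed

lemma qt_gt1: "0 < t \<Longrightarrow> q ^ t > 1" by (rule one_less_power[OF q_gt1])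

lemma fix_M1: "(y::'k) \<noteq> 0 \<Longrightarrow> y ^ (q ^ t) = y \<longleftrightarrow> y ^ (q ^ t - 1) = 1"
proof -
  assume y: "y \<noteq> 0"
  have "y ^ (q ^ t) = y ^ (q ^ t - 1) * y" using q_pos by (simp add: power_Suc2[symmetric])
  then show ?thesis using y by auto
qed

lemma inv_M2: "(y::'k) \<noteq> 0 \<Longrightarrow> y ^ (q ^ t) = inverse y \<longleftrightarrow> y ^ (q ^ t + 1) = 1"
proof -
  assume y: "y \<noteq> 0"
  have "y ^ (q ^ t + 1) = y ^ (q ^ t) * y" by simp
  show ?thesis
  proof
    assume "y ^ (q ^ t) = inverse y"
    then show "y ^ (q ^ t + 1) = 1" using y by simp
  next
    assume "y ^ (q ^ t + 1) = 1"
    then have "y * y ^ (q ^ t) = 1" by (simp add: mult.commute)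
    then have "inverse y = y ^ (q ^ t)" by (rule inverse_unique)
    then show "y ^ (q ^ t) = inverse y" by simp
  qed
qed

lemma finite_mu: "M > 0 \<Longrightarrow> (of_nat M :: 'k) \<noteq> 0 \<Longrightarrow> finite {x::'k. x ^ M = 1}"
proof (rule ccontr)
  assume M: "M > 0" "(of_nat M :: 'k) \<noteq> 0" and "infinite {x::'k. x ^ M = 1}"
  then have "card {x::'k. x ^ M = 1} = 0" by simp
  then show False using roots_card[OF M] M by simp
qed

lemma finite_St: "0 < t \<Longrightarrow> finite (St t)"
proof -
  assume t: "0 < t"
  have sub: "St t \<subseteq> {x. x ^ (q ^ t - 1) = 1} \<union> {x. x ^ (q ^ t + 1) = 1}"
  proof
    fix y assume "y \<in> St t"
    then have y: "y \<noteq> 0" "y ^ (q ^ t) = y \<or> y ^ (q ^ t) = inverse y" unfolding St_def tri_def by auto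
    from y(2) show "y \<in> {x. x ^ (q ^ t - 1) = 1} \<union> {x. x ^ (q ^ t + 1) = 1}"
    proof
      assume "y ^ (q ^ t) = y" then have "y ^ (q ^ t - 1) = 1" using fix_M1[OF y(1)] by blast
      then show ?thesis by blast
    next
      assume "y ^ (q ^ t) = inverse y" then have "y ^ (q ^ t + 1) = 1" using inv_M2[OF y(1)] by blast
      then show ?thesis by blast
    qed
  qed
  have q1: "q ^ t - 1 > 0" using qt_gt1[OF t] by simp
  have q2: "q ^ t + 1 > 0" by simp
  have f1: "finite {x::'k. x ^ (q ^ t - 1) = 1}" using finite_mu[OF q1] ofM[OF t] by blast
  have f2: "finite {x::'k. x ^ (q ^ t + 1) = 1}" using finite_mu[OF q2] ofM[OF t] by blast
  have "finite ({x::'k. x ^ (q ^ t - 1) = 1} \<union> {x. x ^ (q ^ t + 1) = 1})" using f1 f2 by (rule finite_UnI)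
  then show ?thesis by (rule finite_subset[OF sub])
qed

lemma charsum:
  assumes M: "M > 0" "even M" and nz: "(of_nat M :: 'k) \<noteq> 0"
  shows "(\<Sum>x\<in>{x::'k. x ^ M = 1}. sg (x ^ (M div 2))) = 0"
proof -
  define U where "U = {x::'k. x ^ M = 1}"
  define H where "H = {x::'k. x ^ (M div 2) = 1}"
  have Msplit: "M = 2 * (M div 2)" using M by simp
  have HU: "H \<subseteq> U"
  proof
    fix x assume "x \<in> H"
    then have "(x ^ (M div 2)) ^ 2 = 1" unfolding H_def by simp
    then show "x \<in> U" unfolding U_def using pow_sq[of x "M div 2"] Msplit by simp
  qed
  have nz2: "(of_nat (M div 2) :: 'k) \<noteq> 0"
  proof
    assume "(of_nat (M div 2) :: 'k) = 0"
    then have "(of_nat M :: 'k) = 0" using Msplit by (metis mult_zero_right of_nat_mult)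
    then show False using nz by simp
  qed
  have cU: "card U = M" unfolding U_def using roots_card M nz by blast
  have M2: "M div 2 > 0" using M by auto
  have cH: "card H = M div 2" unfolding H_def using roots_card[OF M2 nz2] .
  have fU: "finite U" unfolding U_def using finite_mu M nz by blast
  have "(\<Sum>x\<in>U. sg (x ^ (M div 2))) = (\<Sum>x\<in>U - H. sg (x ^ (M div 2))) + (\<Sum>x\<in>H. sg (x ^ (M div 2)))"
    using sum.subset_diff[OF HU fU] by simp
  also have "(\<Sum>x\<in>H. sg (x ^ (M div 2))) = (\<Sum>x\<in>H. 1)"
    by (rule sum.cong) (auto simp: H_def sg_def)
  also have "(\<Sum>x\<in>U - H. sg (x ^ (M div 2))) = (\<Sum>x\<in>U - H. -1)"
    by (rule sum.cong) (auto simp: H_def sg_def)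
  finally have ss: "(\<Sum>x\<in>U. sg (x ^ (M div 2))) = (\<Sum>x\<in>U - H. -1) + (\<Sum>x\<in>H. 1)" .
  have cd: "card (U - H) = M - M div 2" using card_Diff_subset[OF finite_subset[OF HU fU] HU] cU cH by simp
  have "(\<Sum>x\<in>U. sg (x ^ (M div 2))) = - of_nat (M - M div 2) + of_nat (M div 2)"
    unfolding ss using cd cH by simp
  also have "\<dots> = 0" using Msplit by (simp add: of_nat_diff)
  finally show ?thesis unfolding U_def .
qed

lemma sum_pm: "(\<Sum>y\<in>{1::'k, -1}. f y) = f 1 + f (-1)"
  using one_neq_m1 by simp

lemma sg_m1pow: "sg ((-1::'k) ^ a) = (-1) ^ a"
  using sg_pow[of "-1::'k" a] sg_m1 by simp

lemma Stsum:
  assumes t: "0 < t"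
  shows "(\<Sum>y\<in>St t. FF t y) = - 2 * ((-1::rat) ^ ((q - 1) div 2)) ^ t"
proof -
  define M1 where "M1 = q ^ t - 1"
  define M2 where "M2 = q ^ t + 1"
  define U1 where "U1 = {x::'k. x ^ M1 = 1}"
  define U2 where "U2 = {x::'k. x ^ M2 = 1}"
  define a where "a = M1 div 2"
  have M1e: "even M1" "M1 > 0" unfolding M1_def using qn_odd[of t] qt_gt1[OF t] by auto
  have M2e: "even M2" "M2 > 0" unfolding M2_def using qn_odd[of t] by auto
  have M12: "M2 = M1 + 2" unfolding M1_def M2_def using qt_gt1[OF t] by simp
  have M2a: "M2 div 2 = a + 1" unfolding a_def M12 by simp
  have nz1: "(of_nat M1 :: 'k) \<noteq> 0" and nz2: "(of_nat M2 :: 'k) \<noteq> 0" using ofM[OF t] M1_def M2_def by auto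
  have fU1: "finite U1" unfolding U1_def using finite_mu M1e nz1 by blast
  have fU2: "finite U2" unfolding U2_def using finite_mu M2e nz2 by blast
  have pm1: "{1, -1} \<subseteq> U1" "{1, -1} \<subseteq> U2" unfolding U1_def U2_def using M1e M2e by auto
  have split: "St t = (U1 - {1, -1}) \<union> (U2 - {1, -1})"
  proof
    show "St t \<subseteq> (U1 - {1, -1}) \<union> (U2 - {1, -1})"
    proof
      fix y assume "y \<in> St t"
      then have y: "y \<noteq> 0" "y \<noteq> 1" "y \<noteq> -1" "y ^ (q ^ t) = y \<or> y ^ (q ^ t) = inverse y"
        unfolding St_def tri_def by auto
      then show "y \<in> (U1 - {1, -1}) \<union> (U2 - {1, -1})"
        unfolding U1_def U2_def M1_def M2_def using fix_M1 inv_M2 by auto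
    qed
  next
    show "(U1 - {1, -1}) \<union> (U2 - {1, -1}) \<subseteq> St t"
    proof
      fix y assume y: "y \<in> (U1 - {1, -1}) \<union> (U2 - {1, -1})"
      then have y0: "y \<noteq> 0" unfolding U1_def U2_def using M1e M2e by (auto simp: power_0_left)
      then show "y \<in> St t" using y unfolding St_def tri_def U1_def U2_def M1_def M2_def
        using fix_M1 inv_M2 by auto
    qed
  qed
  have disj: "(U1 - {1, -1}) \<inter> (U2 - {1, -1}) = {}"
  proof (rule ccontr)
    assume "(U1 - {1, -1}) \<inter> (U2 - {1, -1}) \<noteq> {}"
    then obtain y where "y \<in> (U1 - {1, -1}) \<inter> (U2 - {1, -1})" by blast
    then have y: "y ^ M1 = 1" "y ^ M2 = 1" "y \<noteq> 1" "y \<noteq> -1" unfolding U1_def U2_def by auto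
    have "y ^ M2 = y ^ M1 * y ^ 2" unfolding M12 by (rule power_add)
    then have "y ^ 2 = 1" using y by simp
    then show False using sq1_cases y by blast
  qed
  have on1: "FF t y = sg (y ^ (M1 div 2))" if "y \<in> U1 - {1, -1}" for y
  proof -
    have "y \<noteq> 0" using that M1e unfolding U1_def by (auto simp: power_0_left)
    then have "y ^ (q ^ t) = y" using that fix_M1 unfolding U1_def M1_def by simp
    then show ?thesis unfolding FF_def M1_def by simp
  qed
  have on2: "FF t y = - sg (y ^ (M2 div 2))" if "y \<in> U2 - {1, -1}" for y
  proof -
    have "y \<noteq> 0" using that M2e unfolding U2_def by (auto simp: power_0_left)
    moreover have "y \<notin> U1 - {1, -1}" using disj that by blast
    then have "y ^ M1 \<noteq> 1" using that unfolding U1_def by auto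
    ultimately have "y ^ (q ^ t) \<noteq> y" using fix_M1 unfolding M1_def by simp
    then show ?thesis unfolding FF_def M2_def by simp
  qed
  have s1: "(\<Sum>y\<in>U1 - {1, -1}. FF t y) = - (1 + (-1) ^ a)"
  proof -
    have "(\<Sum>y\<in>U1 - {1, -1}. FF t y) = (\<Sum>y\<in>U1 - {1, -1}. sg (y ^ (M1 div 2)))"
      using on1 by (rule sum.cong[OF refl])
    also have "\<dots> = (\<Sum>y\<in>U1. sg (y ^ (M1 div 2))) - (\<Sum>y\<in>{1, -1}. sg (y ^ (M1 div 2)))"
      using sum_diff[OF fU1 pm1(1)] by simp
    also have "(\<Sum>y\<in>U1. sg (y ^ (M1 div 2))) = 0" unfolding U1_def using charsum M1e nz1 by blast
    also have "(\<Sum>y\<in>{1, -1}. sg (y ^ (M1 div 2))) = 1 + (-1) ^ a"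
      using one_neq_m1 by (simp add: sg_1 sg_m1pow a_def)
    finally show ?thesis by simp
  qed
  have s2: "(\<Sum>y\<in>U2 - {1, -1}. FF t y) = 1 + (-1) ^ (a + 1)"
  proof -
    have "(\<Sum>y\<in>U2 - {1, -1}. FF t y) = (\<Sum>y\<in>U2 - {1, -1}. - sg (y ^ (M2 div 2)))"
      using on2 by (rule sum.cong[OF refl])
    also have "\<dots> = - ((\<Sum>y\<in>U2. sg (y ^ (M2 div 2))) - (\<Sum>y\<in>{1, -1}. sg (y ^ (M2 div 2))))"
      by (simp only: sum_negf sum_diff[OF fU2 pm1(2)])
    also have "(\<Sum>y\<in>U2. sg (y ^ (M2 div 2))) = 0" unfolding U2_def using charsum M2e nz2 by blast
    also have "(\<Sum>y\<in>{1, -1}. sg (y ^ (M2 div 2))) = 1 + (-1) ^ (a + 1)"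
    proof -
      have h: "sg ((-1::'k) ^ (M2 div 2)) = (-1) ^ (a + 1)" unfolding M2a by (rule sg_m1pow)
      have "(\<Sum>y\<in>{1, -1}. sg (y ^ (M2 div 2))) = sg (1 ^ (M2 div 2)) + sg ((-1::'k) ^ (M2 div 2))"
        by (rule sum_pm)
      then show ?thesis unfolding h by (simp add: sg_1)
    qed
    finally show ?thesis by simp
  qed
  have "(\<Sum>y\<in>St t. FF t y) = (\<Sum>y\<in>U1 - {1, -1}. FF t y) + (\<Sum>y\<in>U2 - {1, -1}. FF t y)"
    unfolding split using sum.union_disjoint[OF _ _ disj] fU1 fU2 by simp
  also have "\<dots> = - 2 * (-1) ^ a" using s1 s2 by simp
  also have "(-1::rat) ^ a = ((-1) ^ ((q - 1) div 2)) ^ t" unfolding a_def M1_def by (rule NL4[OF q_odd])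
  finally show ?thesis .
qed

end

context frob
begin

lemma Omega_mem: "Ob \<in> (Omega q :: 'k set set) \<Longrightarrow> y \<in> Ob \<Longrightarrow> ag_orbit q y = Ob"
proof -
  assume Ob: "Ob \<in> Omega q" and y: "y \<in> Ob"
  define l0 where "l0 = (SOME l. l \<in> Ob)"
  have r: "ag_orbit q l0 = Ob" using Omega_rep[OF Ob] l0_def by auto
  show ?thesis using ag_class[of y l0] r y by simp
qed

lemma Omega_fin: "Ob \<in> (Omega q :: 'k set set) \<Longrightarrow> finite Ob"
  unfolding Omega_def using ag_finite by blast

lemma coeff_identity:
  assumes n: "n > 0"
  shows "(\<Sum>Ob\<in>{Ob \<in> (Omega q :: 'k set set). card Ob dvd n}.
            of_nat (card Ob) * ((-1::rat) ^ (jO q Ob + epsO q Ob)) ^ (n div card Ob))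
         = (if even n then - 2 * ((-1::rat) ^ ((q - 1) div 2)) ^ (n div 2) else 0)"
proof (cases "even n")
  case False
  have e: "{Ob \<in> (Omega q :: 'k set set). card Ob dvd n} = {}"
  proof (rule ccontr)
    assume "{Ob \<in> (Omega q :: 'k set set). card Ob dvd n} \<noteq> {}"
    then obtain Ob where Ob: "Ob \<in> (Omega q :: 'k set set)" "card Ob dvd n" by blast
    have "even (card Ob)" using Omega_card[OF Ob(1)] by simp
    then have "even n" using Ob(2) by (rule dvd_trans)
    then show False using False by simp
  qed
  show ?thesis unfolding e using False by simp
next
  case True
  then obtain t where t: "n = 2 * t" by blast
  have t0: "0 < t" using t n by simp
  have eqOm: "{Ob \<in> (Omega q :: 'k set set). card Ob dvd n} = Om t" unfolding Om_def t by simp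
  have finOm: "finite (Om t)"
  proof -
    have "Om t \<subseteq> Pow (St t)" using Union_Om[of t] by blast
    then show ?thesis using finite_St[OF t0] by (simp add: finite_subset)
  qed
  have disj: "\<forall>A\<in>Om t. \<forall>B\<in>Om t. A \<noteq> B \<longrightarrow> A \<inter> B = {}"
  proof (intro ballI impI)
    fix A B assume A: "A \<in> Om t" and B: "B \<in> Om t" and AB: "A \<noteq> B"
    show "A \<inter> B = {}"
    proof (rule ccontr)
      assume "A \<inter> B \<noteq> {}"
      then obtain y where "y \<in> A" "y \<in> B" by blast
      then have "ag_orbit q y = A" "ag_orbit q y = B" using Omega_mem A B unfolding Om_def by auto
      then show False using AB by simp
    qed
  qed
  have finE: "\<forall>A\<in>Om t. finite A" using Omega_fin unfolding Om_def by blast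
  have "(\<Sum>y\<in>St t. FF t y) = (\<Sum>Ob\<in>Om t. \<Sum>y\<in>Ob. FF t y)"
    unfolding Union_Om[symmetric] using sum.Union_disjoint[OF finE disj, of "FF t"] by (simp add: comp_def)
  also have "\<dots> = (\<Sum>Ob\<in>Om t. of_nat (card Ob) * ((-1::rat) ^ (jO q Ob + epsO q Ob)) ^ (n div card Ob))"
  proof (rule sum.cong[OF refl])
    fix Ob assume Ob: "Ob \<in> Om t"
    have "(\<Sum>y\<in>Ob. FF t y) = (\<Sum>y\<in>Ob. ((-1::rat) ^ (jO q Ob + epsO q Ob)) ^ (2 * t div card Ob))"
      using orbit_term[OF _ t0] Ob unfolding Om_def by (intro sum.cong refl) auto
    then show "(\<Sum>y\<in>Ob. FF t y) = of_nat (card Ob) * ((-1::rat) ^ (jO q Ob + epsO q Ob)) ^ (n div card Ob)"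
      using t by simp
  qed
  finally have "(\<Sum>Ob\<in>Om t. of_nat (card Ob) * ((-1::rat) ^ (jO q Ob + epsO q Ob)) ^ (n div card Ob))
      = - 2 * ((-1::rat) ^ ((q - 1) div 2)) ^ t" using Stsum[OF t0] by simp
  then show ?thesis unfolding eqOm using True t by simp
qed

lemma main_lim:
  "(\<lambda>N. \<Prod>Ob\<in>{Ob \<in> (Omega q :: 'k set set). card Ob \<le> N}.
            inverse (1 - fps_const ((-1::rat) ^ (jO q Ob + epsO q Ob)) * fps_X ^ card Ob))
         \<longlonglongrightarrow> (1 - fps_const ((-1::rat) ^ ((q - 1) div 2)) * fps_X ^ 2)"
proof -
  define cc where "cc Ob = (-1::rat) ^ (jO q Ob + epsO q Ob)" for Ob :: "'k set"
  define u where "u = (-1::rat) ^ ((q - 1) div 2)"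
  define G where "G = 1 - fps_const u * fps_X ^ 2"
  define SN where "SN N = {Ob \<in> (Omega q :: 'k set set). card Ob \<le> N}" for N
  define fa where "fa Ob = inverse (1 - fps_const (cc Ob) * fps_X ^ card Ob)" for Ob :: "'k set"
  define A where "A N = (\<Prod>Ob\<in>SN N. fa Ob)" for N
  have finSN: "finite (SN N)" for N
  proof -
    have "SN N \<subseteq> Pow (\<Union>t\<in>{1..N}. St t)"
    proof
      fix Ob assume Ob: "Ob \<in> SN N"
      then have O1: "Ob \<in> Omega q" "card Ob \<le> N" unfolding SN_def by auto
      define t where "t = card Ob div 2"
      have ct: "card Ob = 2 * t" "0 < t" using Omega_card[OF O1(1)] t_def by auto
      have "Ob \<in> Om t" unfolding Om_def using O1 ct by simp
      then have "Ob \<subseteq> St t" using Union_Om[of t] by blast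
      moreover have "t \<in> {1..N}" using ct O1 by simp
      ultimately show "Ob \<in> Pow (\<Union>t\<in>{1..N}. St t)" by blast
    qed
    moreover have "finite (\<Union>t\<in>{1..N}. St t)" using finite_St by simp
    ultimately show ?thesis by (simp add: finite_subset)
  qed
  have cpos: "Ob \<in> SN N \<Longrightarrow> card Ob > 0" for Ob N using Omega_card unfolding SN_def by blast
  have fa0: "fa Ob $ 0 = 1" if "Ob \<in> SN N" for Ob N
    using cpos[OF that] unfolding fa_def by simp
  have A0: "A N $ 0 = 1" for N
    unfolding A_def using prod_nth0[OF finSN] fa0 by simp
  have G0: "G $ 0 = 1" unfolding G_def by simp
  have EEA: "EE (A N) $ i = (\<Sum>Ob\<in>SN N. (if card Ob dvd i \<and> i \<noteq> 0 then of_nat (card Ob) * cc Ob ^ (i div card Ob) else 0))" for N i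
  proof -
    have "EE (A N) = (\<Sum>Ob\<in>SN N. EE (fa Ob))"
      unfolding A_def by (rule EE_prod[OF finSN]) (simp add: fa0)
    then have "EE (A N) $ i = (\<Sum>Ob\<in>SN N. EE (fa Ob) $ i)" by (simp add: fps_sum_nth)
    also have "\<dots> = (\<Sum>Ob\<in>SN N. (if card Ob dvd i \<and> i \<noteq> 0 then of_nat (card Ob) * cc Ob ^ (i div card Ob) else 0))"
      by (rule sum.cong[OF refl]) (simp add: fa_def EE_geo cpos)
    finally show ?thesis .
  qed
  have EEG: "EE G $ i = - (if 2 dvd i \<and> i \<noteq> 0 then of_nat 2 * u ^ (i div 2) else 0)" for i
  proof -
    have "EE (inverse G) = - EE G" using EE_inverse G0 by simp
    then have "EE G = - EE (inverse G)" by simp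
    then show ?thesis unfolding G_def using EE_geo[of 2 u i] by simp
  qed
  have agree: "A N $ n = G $ n" if "n \<le> N" for N n
  proof (rule EE_unique[where N = N])
    show "A N $ 0 = G $ 0" using A0 G0 by simp
    show "A N $ 0 \<noteq> 0" using A0 by simp
    show "n \<le> N" by fact
  next
    fix i assume i: "i \<le> N"
    show "EE (A N) $ i = EE G $ i"
    proof (cases "i = 0")
      case True then show ?thesis by (simp add: EE_nth0)
    next
      case False
      have "EE (A N) $ i = (\<Sum>Ob\<in>{Ob \<in> SN N. card Ob dvd i \<and> i \<noteq> 0}. of_nat (card Ob) * cc Ob ^ (i div card Ob))"
        unfolding EEA by (rule sum.inter_filter[OF finSN, symmetric])
      also have "{Ob \<in> SN N. card Ob dvd i \<and> i \<noteq> 0} = {Ob \<in> (Omega q :: 'k set set). card Ob dvd i}"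
      proof -
        have "card Ob \<le> N" if "card Ob dvd i" for Ob :: "'k set"
          using dvd_imp_le[OF that] False i by simp
        then show ?thesis unfolding SN_def using False by auto
      qed
      also have "(\<Sum>Ob\<in>{Ob \<in> (Omega q :: 'k set set). card Ob dvd i}. of_nat (card Ob) * cc Ob ^ (i div card Ob))
          = (if even i then - 2 * u ^ (i div 2) else 0)"
        unfolding cc_def u_def using coeff_identity False by simp
      also have "\<dots> = EE G $ i" using EEG False by simp
      finally show ?thesis .
    qed
  qed
  have "(\<lambda>N. A N) \<longlonglongrightarrow> G"
  proof (rule tendsto_fpsI)
    fix n
    show "\<forall>\<^sub>F N in sequentially. A N $ n = G $ n"
      using agree by (intro eventually_sequentiallyI[of n]) simp
  qed
  then show ?thesis unfolding A_def SN_def fa_def cc_def G_def u_def .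
qed

end

theorem mainTheorem9:
  fixes p m q :: nat
  assumes "prime p" and "odd p" and "m > 0" and "q = p ^ m"
    and "CHAR('k::alg_closed_field) = p"
    and "algebraic_over_prime_field TYPE('k)"
  shows "(\<lambda>N. \<Prod>Ob\<in>{Ob \<in> (Omega q :: 'k set set). card Ob \<le> N}.
            inverse (1 - fps_const ((-1::rat) ^ (jO q Ob + epsO q Ob)) * fps_X ^ card Ob))
         \<longlonglongrightarrow> (1 - fps_const ((-1::rat) ^ ((q - 1) div 2)) * fps_X ^ 2)"
proof -
  interpret frob p m q "TYPE('k)"
    by unfold_locales (use assms in auto)
  show ?thesis by (rule main_lim)
qed


end
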